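(* Consider POWERSET MALIQUANT. The sequence starts at a heap of size one, and the first eight nim-values are, $0,0,1,0,2,1,4,8$. Otherwise, if $n=2k+1, k\ge 4$, then $\mathcal{SG}(n)=2^k$, and if $n\ge 10$ is even, then $\mathcal{SG}(n)=\mathcal{SG}(n/2)$.
   Context: POWERSET MALIQUANT is the impartial normal-play game on positive integer heaps where from a heap $n$ a player chooses any nonempty set of nondivisors $k$ of $n$ with $1\le k<n$ and moves to the disjunctive sum of those heaps; a heap with no such nondivisors is terminal. $\mathcal{SG}$ (nim-value) denotes the Sprague-Grundy value (mex rule, nim-sum). *)

theory Defs
  imports Main
begin

definition mex :: "nat set \<Rightarrow> nat" where
  "mex A = (LEAST m. m \<notin> A)"

text \<open>Nondivisors k of n with 1 \<le> k < n (the heaps one may move to).\<close>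
definition nondivs :: "nat \<Rightarrow> nat set" where
  "nondivs n = {k. 1 \<le> k \<and> k < n \<and> \<not> k dvd n}"

definition nimsum :: "(nat \<Rightarrow> nat) \<Rightarrow> nat set \<Rightarrow> nat" where
  "nimsum f S = foldr (\<lambda>k a. xor (f k) a) (sorted_list_of_set S) 0"

definition pm_step :: "(nat \<Rightarrow> nat) \<Rightarrow> nat \<Rightarrow> nat" where
  "pm_step f n = mex {nimsum f S | S. S \<subseteq> nondivs n \<and> S \<noteq> {}}"

text \<open>Table of nim-values of heaps 1..n (value at 0 is an irrelevant dummy 0).\<close>
primrec pm_upto :: "nat \<Rightarrow> nat \<Rightarrow> nat" where
  "pm_upto 0 = (\<lambda>_. 0)"
| "pm_upto (Suc n) = (pm_upto n)(Suc n := pm_step (pm_upto n) (Suc n))"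

definition pm_sg :: "nat \<Rightarrow> nat" where
  "pm_sg n = pm_upto n n"

end

theory Submission
  imports Defs
begin

lemma xor_pow_add: "(y::nat) < 2^e \<Longrightarrow> xor (2^e) y = 2^e + y"
proof -
  assume y: "y < 2^e"
  have "and ((2::nat)^e) y = 0"
  proof (rule bit_eqI)
    fix n
    have "\<not> bit y e" using y by (simp add: bit_iff_odd)
    then show "bit (and ((2::nat)^e) y) n = bit 0 n" by (auto simp: bit_simps)
  qed
  then show ?thesis by (simp add: disjunctive_add_eq_xor)
qed

lemma foldr_insort: "foldr (\<lambda>k a. xor (f k) a) (insort x xs) (0::nat) = xor (f x) (foldr (\<lambda>k a. xor (f k) a) xs 0)"
  by (induction xs) (auto simp: ac_simps)

lemma nimsum_empty[simp]: "nimsum f {} = 0" by (simp add: nimsum_def)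

lemma nimsum_insert: "finite S \<Longrightarrow> x \<notin> S \<Longrightarrow> nimsum f (insert x S) = xor (f x) (nimsum f S)"
  by (simp add: nimsum_def sorted_list_of_set_insert foldr_insort)

lemma nimsum_single: "nimsum f {z} = f z"
  using nimsum_insert[of "{}" z f] by simp

lemma nimsum_pair: "a \<noteq> b \<Longrightarrow> nimsum f {a,b} = xor (f a) (f b)"
  using nimsum_insert[of "{b}" a f] by (simp add: nimsum_single)

lemma nimsum_nobit: "finite S \<Longrightarrow> (\<forall>k\<in>S. \<not> bit (f k) e) \<Longrightarrow> \<not> bit (nimsum f S) e"
  by (induction S rule: finite_induct) (auto simp: nimsum_insert bit_simps)

lemma nimsum_cong: "finite S \<Longrightarrow> (\<forall>k\<in>S. f k = f' k) \<Longrightarrow> nimsum f S = nimsum f' S"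
  by (induction S rule: finite_induct) (auto simp: nimsum_insert)

lemma achieve:
  assumes "finite N" "\<forall>i<e. \<exists>h\<in>N. f h = 2^i"
  shows "\<forall>x<2^e. \<exists>S. S \<subseteq> {h\<in>N. f h < 2^e} \<and> nimsum f S = x"
  using assms(2)
proof (induction e)
  case 0
  then show ?case by (intro allI impI exI[of _ "{}"]) auto
next
  case (Suc e)
  have IH: "\<forall>x<2^e. \<exists>S. S \<subseteq> {h\<in>N. f h < 2^e} \<and> nimsum f S = x"
    using Suc by auto
  obtain he where he: "he \<in> N" "f he = 2^e" using Suc.prems by auto
  show ?case
  proof (intro allI impI)
    fix x :: nat assume x: "x < 2^Suc e"
    show "\<exists>S. S \<subseteq> {h\<in>N. f h < 2^Suc e} \<and> nimsum f S = x"
    proof (cases "x < 2^e")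
      case True
      then obtain S where "S \<subseteq> {h\<in>N. f h < 2^e}" "nimsum f S = x" using IH by auto
      then show ?thesis by (intro exI[of _ S]) auto
    next
      case False
      define y where "y = x - 2^e"
      have y: "y < 2^e" using x False by (simp add: y_def)
      then obtain S where S: "S \<subseteq> {h\<in>N. f h < 2^e}" "nimsum f S = y" using IH by auto
      have "S \<subseteq> N" using S(1) by blast
      then have fin: "finite S" using assms(1) by (rule finite_subset)
      have "he \<notin> S" using S(1) he by auto
      then have "nimsum f (insert he S) = x"
        using fin S(2) he y False by (simp add: nimsum_insert xor_pow_add y_def)
      moreover have "insert he S \<subseteq> {h\<in>N. f h < 2^Suc e}" using S(1) he by auto
      ultimately show ?thesis by blast
    qed
  qed
qed

lemma mex_pow:
  assumes fin: "finite N"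
    and pw: "\<forall>h\<in>N. f h = 0 \<or> (\<exists>i. f h = 2^i)"
    and wit: "\<forall>i<e. \<exists>h\<in>N. f h = 2^i"
    and zero: "(\<exists>z\<in>N. f z = 0) \<or> (\<exists>a\<in>N. \<exists>b\<in>N. a \<noteq> b \<and> f a = f b)"
    and no: "\<forall>h\<in>N. f h \<noteq> 2^e"
  shows "mex {nimsum f S | S. S \<subseteq> N \<and> S \<noteq> {}} = 2^e"
proof -
  let ?A = "{nimsum f S | S. S \<subseteq> N \<and> S \<noteq> {}}"
  have z: "0 \<in> ?A"
    using zero
  proof
    assume "\<exists>z\<in>N. f z = 0"
    then obtain z where "z \<in> N" "f z = 0" by auto
    then show ?thesis by (auto intro!: exI[of _ "{z}"] simp: nimsum_single)
  next
    assume "\<exists>a\<in>N. \<exists>b\<in>N. a \<noteq> b \<and> f a = f b"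
    then obtain a b where "a \<in> N" "b \<in> N" "a \<noteq> b" "f a = f b" by auto
    then show ?thesis by (auto intro!: exI[of _ "{a,b}"] simp: nimsum_pair)
  qed
  have all: "x \<in> ?A" if "x < 2^e" for x
  proof (cases "x = 0")
    case True then show ?thesis using z by simp
  next
    case False
    have "\<forall>x<2^e. \<exists>S. S \<subseteq> {h\<in>N. f h < 2^e} \<and> nimsum f S = x" by (rule achieve[OF fin wit])
    from this[rule_format, OF that] obtain S where S: "S \<subseteq> {h\<in>N. f h < 2^e}" "nimsum f S = x" by blast
    have ne: "S \<noteq> {}"
    proof
      assume "S = {}" then have "nimsum f S = 0" by simp
      then show False using S(2) False by simp
    qed
    have sn: "S \<subseteq> N" using S(1) by blast
    show ?thesis using ne sn S(2) by blast
  qed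
  have notin: "2^e \<notin> ?A"
  proof
    assume "2^e \<in> ?A"
    then have "\<exists>S. 2^e = nimsum f S \<and> S \<subseteq> N \<and> S \<noteq> {}" by (simp only: mem_Collect_eq)
    then obtain S where S0: "2^e = nimsum f S \<and> S \<subseteq> N \<and> S \<noteq> {}" ..
    then have S: "S \<subseteq> N" "nimsum f S = 2^e" by simp_all
    have "finite S" by (rule finite_subset[OF S(1) fin])
    moreover have "\<forall>k\<in>S. \<not> bit (f k) e"
    proof
      fix k assume "k \<in> S"
      then have "k \<in> N" using S by auto
      then have "f k = 0 \<or> (\<exists>i. f k = 2^i)" "f k \<noteq> 2^e" using pw no by auto
      then show "\<not> bit (f k) e"
      proof (elim disjE exE)
        assume "f k = 0" then show ?thesis by simp
      next
        fix i assume i: "f k = 2^i"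
        then have "i \<noteq> e" using \<open>f k \<noteq> 2^e\<close> by auto
        then show ?thesis using i by (simp add: bit_exp_iff)
      qed
    qed
    ultimately have "\<not> bit (nimsum f S) e" by (rule nimsum_nobit)
    then show False using S(2) by (simp add: bit_exp_iff)
  qed
  show ?thesis unfolding mex_def
  proof (rule Least_equality)
    show "2^e \<notin> ?A" by (rule notin)
  next
    fix y assume "y \<notin> ?A"
    show "2^e \<le> y"
    proof (rule ccontr)
      assume "\<not> 2^e \<le> y"
      then have "y < 2^e" by simp
      then have "y \<in> ?A" by (rule all)
      then show False using \<open>y \<notin> ?A\<close> by contradiction
    qed
  qed
qed


definition cc :: "nat \<Rightarrow> nat" where
  "cc i = (if i = 0 then 3 else if i = 1 then 5 else if i = 2 then 7 else if i = 3 then 8 else 2*i+1)"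

function gg :: "nat \<Rightarrow> nat" where
  "gg n = (if n \<le> 8 then [0,0,0,1,0,2,1,4,8] ! n else if odd n then 2^(n div 2) else gg (n div 2))"
  by pat_completeness auto
termination by (relation "measure id") auto

declare gg.simps[simp del]

lemma gg_small: "gg 0 = 0" "gg 1 = 0" "gg 2 = 0" "gg 3 = 1" "gg 4 = 0" "gg 5 = 2" "gg 6 = 1" "gg 7 = 4" "gg 8 = 8"
  by (simp_all add: gg.simps)

lemma gg_one: "gg (Suc 0) = 0" by (simp add: gg.simps)

lemma gg_odd: "n > 8 \<Longrightarrow> odd n \<Longrightarrow> gg n = 2^(n div 2)"
  by (simp add: gg.simps)

lemma gg_even: "n > 8 \<Longrightarrow> even n \<Longrightarrow> gg n = gg (n div 2)"
  by (subst gg.simps) simp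

lemma cc_ge: "cc i \<ge> 3" by (simp add: cc_def)

lemma cc_mono: "i < j \<Longrightarrow> cc i < cc j" by (auto simp: cc_def)

lemma gg_cc: "gg (cc i) = 2^i"
proof -
  consider "i = 0" | "i = 1" | "i = 2" | "i = 3" | "i \<ge> 4" by linarith
  then show ?thesis
  proof cases
    case 5
    then have "cc i = 2*i+1" by (simp add: cc_def)
    then show ?thesis using 5 by (simp add: gg_odd)
  qed (simp_all add: cc_def gg_small)
qed

lemma G1: "gg (cc i * 2^a) = 2^i"
proof (induction a)
  case 0 then show ?case by (simp add: gg_cc)
next
  case (Suc a)
  show ?case
  proof (cases "cc i * 2^Suc a > 8")
    case True
    have "gg (cc i * 2^Suc a) = gg (cc i * 2^Suc a div 2)" using True by (intro gg_even) auto
    also have "cc i * 2^Suc a div 2 = cc i * 2^a" by simp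
    finally show ?thesis using Suc by simp
  next
    case False
    have a: "a = 0"
    proof (rule ccontr)
      assume "a \<noteq> 0"
      then obtain a' where a': "a = Suc a'" by (cases a) auto
      have "(4::nat) \<le> 2^Suc a" unfolding a' by simp
      then have "3 * 4 \<le> cc i * 2^Suc a" using cc_ge[of i] by (intro mult_mono) auto
      then show False using False by simp
    qed
    then have "cc i * 2 \<le> 8" using False by simp
    then have "cc i = 3" "i = 0" by (auto simp: cc_def split: if_splits)
    then show ?thesis using a by (simp add: gg_small)
  qed
qed

lemma G2: "h \<ge> 1 \<Longrightarrow> h \<in> {1,2,4} \<or> (\<exists>i a. h = cc i * 2^a)"
proof (induction h rule: less_induct)
  case (less h)
  show ?case
  proof (cases "h \<le> 8")
    case True
    then consider "h = 1" | "h = 2" | "h = 3" | "h = 4" | "h = 5" | "h = 6" | "h = 7" | "h = 8"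
      using less.prems by linarith
    then show ?thesis
    proof cases
      case 3 then show ?thesis by (intro disjI2 exI[of _ 0]) (simp add: cc_def)
    next
      case 5 then show ?thesis by (intro disjI2 exI[of _ 1] exI[of _ 0]) (simp add: cc_def)
    next
      case 6 then show ?thesis by (intro disjI2 exI[of _ 0] exI[of _ 1]) (simp add: cc_def)
    next
      case 7 then show ?thesis by (intro disjI2 exI[of _ 2] exI[of _ 0]) (simp add: cc_def)
    next
      case 8 then show ?thesis by (intro disjI2 exI[of _ 3] exI[of _ 0]) (simp add: cc_def)
    qed auto
  next
    case False
    show ?thesis
    proof (cases "odd h")
      case True
      then have "h = cc (h div 2) * 2^0" using False by (auto simp: cc_def elim!: oddE)
      then show ?thesis by blast
    next
      case ev: False
      have "h div 2 \<ge> 5" using False ev by (auto elim!: evenE)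
      then have "h div 2 \<notin> {1,2,4}" by auto
      then obtain i a where "h div 2 = cc i * 2^a" using less.IH[of "h div 2"] False by fastforce
      then have "h = cc i * 2^Suc a" using ev by (metis dvd_mult_div_cancel mult.assoc mult.commute power_Suc)
      then show ?thesis by blast
    qed
  qed
qed

lemma gg_pw: "gg h = 0 \<or> (\<exists>i. gg h = 2^i)"
proof (cases "h = 0")
  case True then show ?thesis by (simp add: gg_small)
next
  case False
  then have "h \<in> {1,2,4} \<or> (\<exists>i a. h = cc i * 2^a)" using G2 by simp
  then show ?thesis using G1 by (auto simp: gg_small gg_one)
qed

lemma pow_bracket: "0 < (c::nat) \<Longrightarrow> c < n \<Longrightarrow> \<exists>a. c * 2^a < n \<and> n \<le> c * 2^Suc a"
proof (induction "n - c" arbitrary: c rule: less_induct)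
  case less
  show ?case
  proof (cases "n \<le> 2 * c")
    case True then show ?thesis using less.prems by (intro exI[of _ 0]) auto
  next
    case False
    then obtain a where "2 * c * 2^a < n \<and> n \<le> 2 * c * 2^Suc a"
      using less.hyps[of "2*c"] less.prems False by fastforce
    then show ?thesis by (intro exI[of _ "Suc a"]) (simp add: ac_simps)
  qed
qed


lemma nondivs_fin: "finite (nondivs n)"
  by (rule finite_subset[of _ "{..<n}"]) (auto simp: nondivs_def)

lemma mex_empty_set: "mex {} = 0" by (simp add: mex_def)

lemma step_small:
  assumes "nondivs n = {}" shows "pm_step f n = 0"
  using assms by (simp add: pm_step_def mex_empty_set)

lemma step_gg: assumes n: "n \<ge> 1" shows "pm_step gg n = gg n"
proof (cases "n \<in> {1,2,4}")
  case True
  then consider "n = 1" | "n = 2" | "n = 4" by auto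
  then show ?thesis
  proof cases
    case 1
    have "nondivs n = {}" using 1 by (auto simp: nondivs_def)
    then show ?thesis using 1 by (simp add: step_small gg_one)
  next
    case 2
    have "k < 2 \<Longrightarrow> 1 \<le> k \<Longrightarrow> k = (1::nat)" for k by simp
    then have "nondivs n = {}" using 2 unfolding nondivs_def by fastforce
    then show ?thesis using 2 by (simp add: step_small gg_small)
  next
    case 3
    have nd: "nondivs n = {3}"
    proof -
      have "k < 4 \<Longrightarrow> 1 \<le> k \<Longrightarrow> \<not> k dvd 4 \<Longrightarrow> k = (3::nat)" for k
        by (cases "k = 1"; cases "k = 2"; cases "k = 3") auto
      then show ?thesis using 3 by (auto simp: nondivs_def)
    qed
    have "{nimsum gg S | S. S \<subseteq> nondivs n \<and> S \<noteq> {}} = {1}"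
      unfolding nd by (auto simp: nimsum_single gg_small subset_singleton_iff intro!: exI[of _ "{3}"])
    then show ?thesis using 3 by (simp add: pm_step_def mex_def gg_small)
  qed
next
  case False
  then obtain e b where nb: "n = cc e * 2^b" using G2 n by blast
  have gn: "gg n = 2^e" using nb G1 by simp
  have "pm_step gg n = 2^e" unfolding pm_step_def
  proof (rule mex_pow)
    show "finite (nondivs n)" by (rule nondivs_fin)
    show "\<forall>h\<in>nondivs n. gg h = 0 \<or> (\<exists>i. gg h = 2 ^ i)" using gg_pw by blast
    show "\<forall>i<e. \<exists>h\<in>nondivs n. gg h = 2 ^ i"
    proof (intro allI impI)
      fix i assume i: "i < e"
      have "cc i < cc e" using i by (rule cc_mono)
      also have "cc e \<le> n" using nb by simp
      finally have cn: "cc i < n" .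
      obtain a where a: "cc i * 2^a < n" "n \<le> cc i * 2^Suc a"
        using pow_bracket[OF _ cn] cc_ge[of i] by auto
      have "n \<noteq> cc i * 2^Suc a"
      proof
        assume "n = cc i * 2^Suc a"
        then have "gg n = 2^i" using G1[of i "Suc a"] by simp
        then show False using gn i by simp
      qed
      then have a2: "n < 2 * (cc i * 2^a)" using a by simp
      have "\<not> (cc i * 2^a) dvd n"
      proof
        assume "(cc i * 2^a) dvd n"
        then obtain t where t: "n = cc i * 2^a * t" by blast
        have "t > 1" using t a(1) by (metis less_one mult.right_neutral mult_0_right nat_neq_iff not_less_zero)
        then have "n \<ge> cc i * 2^a * 2" unfolding t by simp
        then show False using a2 by simp
      qed
      moreover have "cc i * 2^a \<ge> 1" using cc_ge[of i] by simp
      ultimately show "\<exists>h\<in>nondivs n. gg h = 2 ^ i" using a(1) G1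
        by (intro bexI[of _ "cc i * 2^a"]) (auto simp: nondivs_def)
    qed
    show "(\<exists>z\<in>nondivs n. gg z = 0) \<or> (\<exists>a\<in>nondivs n. \<exists>b\<in>nondivs n. a \<noteq> b \<and> gg a = gg b)"
    proof (cases "odd n")
      case True
      then obtain t where t: "n = 2*t+1" by (auto elim!: oddE)
      then have "t \<noteq> 0" using False by auto
      then have "n \<ge> 3" using t by simp
      then have "2 \<in> nondivs n" using True by (auto simp: nondivs_def)
      then show ?thesis using gg_small by auto
    next
      case ev: False
      show ?thesis
      proof (cases "4 dvd n")
        case False2: False
        obtain t where t: "n = 2*t" using ev by (auto elim!: evenE)
        then have "t \<noteq> 0" "t \<noteq> 1" "t \<noteq> 2" using False n by auto
        then have "n \<ge> 5" using t by simp
        then have "4 \<in> nondivs n" using False2 by (auto simp: nondivs_def)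
        then show ?thesis using gg_small by auto
      next
        case True
        then obtain t where t: "n = 4*t" by (auto elim!: dvdE)
        then have "t \<noteq> 0" "t \<noteq> 1" using False n by auto
        then have n8: "n \<ge> 8" using t by simp
        define a where "a = n div 2 - 1"
        define b where "b = n - 2"
        have nab: "n = 2 * a + 2" "n = b + 2" using n8 ev by (auto simp: a_def b_def)
        have a3: "a \<ge> 3" "b \<ge> 6" using n8 nab by auto
        have "\<not> a dvd n"
        proof
          assume "a dvd n"
          then have "a dvd n - 2*a" by (simp add: dvd_diff_nat)
          moreover have "n - 2*a = 2" using nab(1) by simp
          ultimately have "a dvd 2" by simp
          then show False using a3 by (auto dest: dvd_imp_le)
        qed
        moreover have "\<not> b dvd n"
        proof
          assume "b dvd n"
          then have "b dvd n - b" by (simp add: dvd_diff_nat)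
          moreover have "n - b = 2" using nab(2) by simp
          ultimately have "b dvd 2" by simp
          then show False using a3 by (auto dest: dvd_imp_le)
        qed
        moreover have "gg a = gg b"
        proof (cases "n = 8")
          case True
          then have "a = 3" "b = 6" using nab by auto
          then show ?thesis by (simp add: gg_small)
        next
          case False
          then have "n \<ge> 12" using t n8 by presburger
          then have "b > 8" using nab by simp
          moreover have "even b" using nab ev by simp
          ultimately have "gg b = gg (b div 2)" by (rule gg_even)
          moreover have "b div 2 = a" using nab by simp
          ultimately show ?thesis by simp
        qed
        ultimately show ?thesis using nab a3
          by (intro disjI2 bexI[of _ a] bexI[of _ b]) (auto simp: nondivs_def)
      qed
    qed
    show "\<forall>h\<in>nondivs n. gg h \<noteq> 2 ^ e"
    proof
      fix h assume h: "h \<in> nondivs n"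
      show "gg h \<noteq> 2^e"
      proof
        assume ge: "gg h = 2^e"
        have h1: "h \<ge> 1" "h < n" "\<not> h dvd n" using h by (auto simp: nondivs_def)
        have "h \<notin> {1,2,4}" using ge by (auto simp: gg_small gg_one)
        then obtain j a where ha: "h = cc j * 2^a" using G2 h1 by blast
        then have "j = e" using ge G1 by simp
        then have "cc e * 2^a < cc e * 2^b" using ha nb h1 by simp
        then have "a < b" by simp
        then have "(cc e * 2^a) dvd n" unfolding nb by (simp add: le_imp_power_dvd)
        then show False using h1 ha \<open>j = e\<close> by simp
      qed
    qed
  qed
  then show ?thesis using gn by simp
qed


lemma upto_sg: "1 \<le> m \<Longrightarrow> m \<le> n \<Longrightarrow> pm_upto n m = pm_sg m"
proof (induction n)
  case 0 then show ?case by simp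
next
  case (Suc n)
  show ?case
  proof (cases "m = Suc n")
    case True then show ?thesis by (simp add: pm_sg_def)
  next
    case False then show ?thesis using Suc by simp
  qed
qed

lemma step_cong: "(\<forall>k\<in>nondivs n. f k = f' k) \<Longrightarrow> pm_step f n = pm_step f' n"
proof -
  assume h: "\<forall>k\<in>nondivs n. f k = f' k"
  have "nimsum f S = nimsum f' S" if "S \<subseteq> nondivs n" for S
  proof (rule nimsum_cong)
    show "finite S" using that nondivs_fin by (rule finite_subset)
    show "\<forall>k\<in>S. f k = f' k" using that h by blast
  qed
  note eq = this
  show ?thesis
    unfolding pm_step_def
  proof (rule arg_cong[where f=mex], rule Collect_cong, rule ex_cong1)
    fix u S
    show "(u = nimsum f S \<and> S \<subseteq> nondivs n \<and> S \<noteq> {}) = (u = nimsum f' S \<and> S \<subseteq> nondivs n \<and> S \<noteq> {})"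
    proof (cases "S \<subseteq> nondivs n")
      case True then show ?thesis using eq[OF True] by simp
    next
      case False then show ?thesis by simp
    qed
  qed
qed

lemma sg_step: "n \<ge> 1 \<Longrightarrow> pm_sg n = pm_step pm_sg n"
proof -
  assume "n \<ge> 1"
  then obtain m where m: "n = Suc m" by (cases n) auto
  have "pm_sg n = pm_step (pm_upto m) n" by (simp add: pm_sg_def m)
  also have "\<dots> = pm_step pm_sg n"
    by (rule step_cong) (auto simp: nondivs_def m intro!: upto_sg)
  finally show ?thesis .
qed

lemma sg_gg: "n \<ge> 1 \<Longrightarrow> pm_sg n = gg n"
proof (induction n rule: less_induct)
  case (less n)
  have "pm_sg n = pm_step pm_sg n" using less.prems by (rule sg_step)
  also have "\<dots> = pm_step gg n"
    by (rule step_cong) (auto simp: nondivs_def intro!: less.IH)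
  also have "\<dots> = gg n" using less.prems by (rule step_gg)
  finally show ?case .
qed

theorem mainTheorem16:
  shows "pm_sg 1 = 0 \<and> pm_sg 2 = 0 \<and> pm_sg 3 = 1 \<and> pm_sg 4 = 0 \<and>
         pm_sg 5 = 2 \<and> pm_sg 6 = 1 \<and> pm_sg 7 = 4 \<and> pm_sg 8 = 8 \<and>
         (\<forall>k::nat. k \<ge> 4 \<longrightarrow> pm_sg (2 * k + 1) = 2 ^ k) \<and>
         (\<forall>n::nat. n \<ge> 10 \<and> even n \<longrightarrow> pm_sg n = pm_sg (n div 2))"
proof (intro conjI allI impI)
  show "pm_sg 1 = 0" by (simp add: sg_gg gg_one)
  show "pm_sg 2 = 0" by (simp add: sg_gg gg_small)
  show "pm_sg 3 = 1" by (simp add: sg_gg gg_small)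
  show "pm_sg 4 = 0" by (simp add: sg_gg gg_small)
  show "pm_sg 5 = 2" by (simp add: sg_gg gg_small)
  show "pm_sg 6 = 1" by (simp add: sg_gg gg_small)
  show "pm_sg 7 = 4" by (simp add: sg_gg gg_small)
  show "pm_sg 8 = 8" by (simp add: sg_gg gg_small)
next
  fix k :: nat assume "k \<ge> 4"
  then show "pm_sg (2 * k + 1) = 2 ^ k" by (simp add: sg_gg gg_odd)
next
  fix n :: nat assume H: "n \<ge> 10 \<and> even n"
  then have "n div 2 \<ge> 1" by presburger
  then have "pm_sg n = gg n" "pm_sg (n div 2) = gg (n div 2)" using H by (simp_all add: sg_gg)
  then show "pm_sg n = pm_sg (n div 2)" using \<open>n \<ge> 10 \<and> even n\<close> by (simp add: gg_even)
qed

end
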